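(* If $\|\phi_0\|_{L^2(P_0;\mathcal{H})}<\infty$ and $\|\phi_n^j-\phi_0\|_{L^2(P_0;\mathcal{H})}=o_p(1)$ for each $j\in\{1,2\}$, then $\|\phi_n^j\|_{L^2(P_n^j;\mathcal{H})}^2\to\|\phi_0\|_{L^2(P_0;\mathcal{H})}^2$ in probability for each $j\in\{1,2\}$, and consequently $\frac12\sum_{j=1}^2\|\phi_n^j\|_{L^2(P_n^j;\mathcal{H})}^2\to\|\phi_0\|_{L^2(P_0;\mathcal{H})}^2$ in probability.
   Context: $(\mathcal{Z},\mathbf{B})$ is a Polish space, $\mathcal{H}$ a real separable Hilbert space, $P_0$ a distribution on $\mathcal{Z}$, $\phi_0:\mathcal{Z}\to\mathcal{H}$ Bochner measurable (the efficient influence function at $P_0$ in the paper). For a distribution $Q$, $\|f\|_{L^2(Q;\mathcal{H})}^2=\int\|f(z)\|_{\mathcal{H}}^2Q(dz)$. Cross-fitting: $n$ even, $Z_1,\dots,Z_n$ iid $P_0$; $P_n^1$ is the empirical distribution of $Z_{n/2+1},\dots,Z_n$ and $P_n^2$ that of $Z_1,\dots,Z_{n/2}$; $\phi_n^1:\mathcal{Z}\to\mathcal{H}$ is a Bochner measurable function determined by $Z_1,\dots,Z_{n/2}$ and $\phi_n^2$ one determined by $Z_{n/2+1},\dots,Z_n$ (the efficient influence functions at the cross-fitted estimates of $P_0$ in the paper). *)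

theory Defs
  imports "HOL-Probability.Probability"
begin

definition L2sq :: "'z measure \<Rightarrow> ('z \<Rightarrow> 'h::real_normed_vector) \<Rightarrow> ennreal" where
  "L2sq Q f = (\<integral>\<^sup>+ z. ennreal ((norm (f z))\<^sup>2) \<partial>Q)"

text \<open>Squared norm of f in L^2 of the empirical distribution of the sample points
  X i, i in I (I finite and nonempty): the average of the squared norms.\<close>
definition empL2sq :: "nat set \<Rightarrow> (nat \<Rightarrow> 'z) \<Rightarrow> ('z \<Rightarrow> 'h::real_normed_vector) \<Rightarrow> real" where
  "empL2sq I X f = (\<Sum>i\<in>I. (norm (f (X i)))\<^sup>2) / real (card I)"

definition even_seq :: "nat filter" where
  "even_seq = inf sequentially (principal {n. even n})"

definition conv_in_prob :: "'a measure \<Rightarrow> 'i filter \<Rightarrow> ('i \<Rightarrow> 'a \<Rightarrow> real) \<Rightarrow> real \<Rightarrow> bool" where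
  "conv_in_prob M F Y c \<longleftrightarrow>
     (\<forall>\<epsilon>>0. ((\<lambda>n. measure M {\<omega>\<in>space M. \<epsilon> < \<bar>Y n \<omega> - c\<bar>}) \<longlongrightarrow> 0) F)"

definition op1_enn :: "'a measure \<Rightarrow> 'i filter \<Rightarrow> ('i \<Rightarrow> 'a \<Rightarrow> ennreal) \<Rightarrow> bool" where
  "op1_enn M F Y \<longleftrightarrow>
     (\<forall>\<epsilon>>0. ((\<lambda>n. measure M {\<omega>\<in>space M. ennreal \<epsilon> < Y n \<omega>}) \<longlongrightarrow> 0) F)"

end

theory Submission
  imports Defs
begin

lemma norm_sq_diff_bound:
  fixes a b :: "'h::real_inner"
  assumes t: "t > 0"
  shows "\<bar>(norm (a + b))\<^sup>2 - (norm a)\<^sup>2\<bar> \<le> t * (norm a)\<^sup>2 + (1 + 1/t) * (norm b)\<^sup>2"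
proof -
  have e: "(norm (a + b))\<^sup>2 - (norm a)\<^sup>2 = 2 * (a \<bullet> b) + (norm b)\<^sup>2"
    by (simp add: power2_norm_eq_inner algebra_simps inner_commute)
  have "\<bar>a \<bullet> b\<bar> \<le> norm a * norm b" by (rule Cauchy_Schwarz_ineq2)
  moreover have "2 * (norm a * norm b) \<le> t * (norm a)\<^sup>2 + (1/t) * (norm b)\<^sup>2"
  proof -
    have "0 \<le> (t * norm a - norm b)\<^sup>2" by simp
    hence "2 * t * (norm a * norm b) \<le> t * (t * (norm a)\<^sup>2 + (1/t) * (norm b)\<^sup>2)"
      using t by (simp add: power2_eq_square algebra_simps)
    thus ?thesis using t by (simp add: mult_le_cancel_left_pos mult.assoc)
  qed
  moreover have "(1 + 1/t) * (norm b)\<^sup>2 = (norm b)\<^sup>2 + (1/t) * (norm b)\<^sup>2"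
    by (simp add: algebra_simps)
  moreover have "\<bar>2 * (a \<bullet> b) + (norm b)\<^sup>2\<bar> \<le> 2 * \<bar>a \<bullet> b\<bar> + (norm b)\<^sup>2"
    by (smt (verit) zero_le_power2)
  ultimately show ?thesis unfolding e by linarith
qed


lemma tendsto_0_le_sum:
  fixes f g h :: "'i \<Rightarrow> real"
  assumes "\<And>n. 0 \<le> f n" "\<And>n. f n \<le> g n + h n" "(g \<longlongrightarrow> 0) F" "(h \<longlongrightarrow> 0) F"
  shows "(f \<longlongrightarrow> 0) F"
proof (rule tendsto_sandwich[of "\<lambda>_. 0" f F "\<lambda>n. g n + h n"])
  show "((\<lambda>n. g n + h n) \<longlongrightarrow> 0) F" using tendsto_add_zero[OF assms(3,4)] .
qed (use assms in auto)

lemma measure_le_union2: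
  assumes "prob_space M" "S \<subseteq> T1 \<union> T2" "T1 \<in> sets M" "T2 \<in> sets M"
  shows "measure M S \<le> measure M T1 + measure M T2"
proof -
  interpret prob_space M by fact
  have "measure M S \<le> measure M (T1 \<union> T2)"
    using assms by (intro finite_measure_mono) auto
  also have "\<dots> \<le> measure M T1 + measure M T2" using assms by (intro measure_Un_le) auto
  finally show ?thesis .
qed

lemma conv_comb:
  assumes M: "prob_space M"
    and le: "\<And>n \<omega> t. \<omega> \<in> space M \<Longrightarrow> t > 0 \<Longrightarrow> \<bar>A n \<omega> - B n \<omega>\<bar> \<le> t * \<bar>B n \<omega>\<bar> + (1 + 1/t) * D n \<omega>"
    and Bm: "\<And>n. B n \<in> borel_measurable M" and Dm: "\<And>n. D n \<in> borel_measurable M"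
    and cB: "conv_in_prob M F B c" and cD: "conv_in_prob M F D 0"
  shows "conv_in_prob M F A c"
  unfolding conv_in_prob_def
proof (intro allI impI)
  fix \<epsilon> :: real assume \<epsilon>: "\<epsilon> > 0"
  define t where "t = \<epsilon> / (3 * (\<bar>c\<bar> + 1))"
  define e where "e = min (\<epsilon>/3) 1"
  define e' where "e' = \<epsilon> / (3 * (1 + 1/t))"
  have t: "t > 0" unfolding t_def using \<epsilon> by (auto intro!: divide_pos_pos add_nonneg_pos)
  have e: "e > 0" unfolding e_def using \<epsilon> by auto
  have e': "e' > 0" unfolding e'_def using \<epsilon> t by (auto intro!: divide_pos_pos add_pos_pos)
  have teq: "t * (\<bar>c\<bar> + 1) = \<epsilon>/3" unfolding t_def by (simp add: field_simps add_nonneg_pos)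
  have gen: "x \<noteq> 0 \<Longrightarrow> x * (\<epsilon> / (3 * x)) = \<epsilon>/3" for x :: real by (simp add: field_simps)
  have "1 + 1/t \<noteq> 0" using t by (smt (verit) zero_less_divide_1_iff)
  hence e'eq: "(1 + 1/t) * e' = \<epsilon>/3" unfolding e'_def by (rule gen)
  have e_le: "e \<le> \<epsilon>/3" unfolding e_def by simp
  have sub: "{\<omega>\<in>space M. \<epsilon> < \<bar>A n \<omega> - c\<bar>} \<subseteq>
      {\<omega>\<in>space M. e < \<bar>B n \<omega> - c\<bar>} \<union> {\<omega>\<in>space M. e' < \<bar>D n \<omega> - 0\<bar>}" for n
  proof (rule subsetI, rule ccontr)
    fix \<omega> assume w: "\<omega> \<in> {\<omega>\<in>space M. \<epsilon> < \<bar>A n \<omega> - c\<bar>}"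
      and nw: "\<omega> \<notin> {\<omega>\<in>space M. e < \<bar>B n \<omega> - c\<bar>} \<union> {\<omega>\<in>space M. e' < \<bar>D n \<omega> - 0\<bar>}"
    have sp: "\<omega> \<in> space M" using w by auto
    have b1: "\<bar>B n \<omega> - c\<bar> \<le> e" and d1: "\<bar>D n \<omega>\<bar> \<le> e'" using nw sp by auto
    have "\<bar>B n \<omega>\<bar> \<le> \<bar>c\<bar> + 1" using b1 unfolding e_def by linarith
    hence x1: "t * \<bar>B n \<omega>\<bar> \<le> \<epsilon>/3" using t teq by (metis mult_left_mono less_imp_le)
    have "D n \<omega> \<le> e'" using d1 by linarith
    hence x2: "(1 + 1/t) * D n \<omega> \<le> \<epsilon>/3" using t e'eq
      by (metis mult_left_mono less_imp_le add_pos_pos zero_less_one zero_less_divide_1_iff)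
    have "\<bar>A n \<omega> - c\<bar> \<le> \<bar>A n \<omega> - B n \<omega>\<bar> + \<bar>B n \<omega> - c\<bar>" by linarith
    also have "\<dots> \<le> \<epsilon>/3 + \<epsilon>/3 + \<epsilon>/3" using le[of \<omega> t n, OF sp t] x1 x2 b1 e_le by linarith
    finally show False using w by auto
  qed
  have m1: "{\<omega>\<in>space M. e < \<bar>B n \<omega> - c\<bar>} \<in> sets M" for n using Bm[of n] by measurable
  have m2: "{\<omega>\<in>space M. e' < \<bar>D n \<omega> - 0\<bar>} \<in> sets M" for n using Dm[of n] by measurable
  show "((\<lambda>n. measure M {\<omega> \<in> space M. \<epsilon> < \<bar>A n \<omega> - c\<bar>}) \<longlongrightarrow> 0) F"
    by (rule tendsto_0_le_sum[OF _ measure_le_union2[OF M sub m1 m2]])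
       (use cB cD e e' in \<open>auto simp: conv_in_prob_def\<close>)
qed

lemma half_abs: "\<epsilon> < \<bar>(1/2) * (a + b) - c\<bar> \<Longrightarrow> \<epsilon> < \<bar>a - c\<bar> \<or> \<epsilon> < \<bar>b - (c::real)\<bar>"
proof (rule ccontr)
  assume h: "\<epsilon> < \<bar>(1/2) * (a + b) - c\<bar>" "\<not> (\<epsilon> < \<bar>a - c\<bar> \<or> \<epsilon> < \<bar>b - c\<bar>)"
  have e: "(1/2) * (a + b) - c = ((a - c) + (b - c)) / 2" by (simp add: field_simps)
  have "\<bar>(a - c) + (b - c)\<bar> \<le> \<bar>a - c\<bar> + \<bar>b - c\<bar>" by (rule abs_triangle_ineq)
  hence "2 * \<bar>(1/2) * (a + b) - c\<bar> \<le> \<bar>a - c\<bar> + \<bar>b - c\<bar>" unfolding e by simp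
  moreover have "\<bar>a - c\<bar> \<le> \<epsilon>" "\<bar>b - c\<bar> \<le> \<epsilon>" using h(2) by auto
  ultimately show False using h(1) by (smt (verit))
qed

lemma conv_half:
  assumes M: "prob_space M"
    and Am: "\<And>n. A1 n \<in> borel_measurable M" "\<And>n. A2 n \<in> borel_measurable M"
    and c1: "conv_in_prob M F A1 c" and c2: "conv_in_prob M F A2 c"
  shows "conv_in_prob M F (\<lambda>n \<omega>. (1/2) * (A1 n \<omega> + A2 n \<omega>)) c"
  unfolding conv_in_prob_def
proof (intro allI impI)
  fix \<epsilon> :: real assume \<epsilon>: "\<epsilon> > 0"
  have sub: "{\<omega>\<in>space M. \<epsilon> < \<bar>(1/2) * (A1 n \<omega> + A2 n \<omega>) - c\<bar>} \<subseteq>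
      {\<omega>\<in>space M. \<epsilon> < \<bar>A1 n \<omega> - c\<bar>} \<union> {\<omega>\<in>space M. \<epsilon> < \<bar>A2 n \<omega> - c\<bar>}" for n
    using half_abs by fastforce
  have m1: "{\<omega>\<in>space M. \<epsilon> < \<bar>A1 n \<omega> - c\<bar>} \<in> sets M" for n using Am(1)[of n] by measurable
  have m2: "{\<omega>\<in>space M. \<epsilon> < \<bar>A2 n \<omega> - c\<bar>} \<in> sets M" for n using Am(2)[of n] by measurable
  show "((\<lambda>n. measure M {\<omega>\<in>space M. \<epsilon> < \<bar>(1/2) * (A1 n \<omega> + A2 n \<omega>) - c\<bar>}) \<longlongrightarrow> 0) F"
    by (rule tendsto_0_le_sum[OF _ measure_le_union2[OF M sub m1 m2]])
       (use c1 c2 \<epsilon> in \<open>auto simp: conv_in_prob_def\<close>)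
qed


lemma hoeff_iid:
  fixes M :: "'a measure" and P0 :: "'z measure" and Z :: "nat \<Rightarrow> 'a \<Rightarrow> 'z" and h :: "'z \<Rightarrow> real"
  assumes M: "prob_space M"
    and indep: "prob_space.indep_vars M (\<lambda>_. P0) Z UNIV"
    and distr: "\<And>i. distr M P0 (Z i) = P0"
    and hm: "h \<in> borel_measurable P0" and hb: "\<And>x. 0 \<le> h x" "\<And>x. h x \<le> K" and K: "K > 0"
    and I: "finite I" "I \<noteq> {}" and e: "e \<ge> 0"
  shows "measure M {\<omega>\<in>space M. e \<le> \<bar>(\<Sum>i\<in>I. h (Z i \<omega>)) / real (card I) - (\<integral>x. h x \<partial>P0)\<bar>}
           \<le> 2 * exp (- 2 * real (card I) * e\<^sup>2 / K\<^sup>2)"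
proof -
  interpret prob_space M by fact
  have Zm[measurable]: "Z i \<in> measurable M P0" for i
    using indep unfolding indep_vars_def by auto
  note hm[measurable]
  have ex: "expectation (\<lambda>\<omega>. h (Z 0 \<omega>)) = (\<integral>x. h x \<partial>P0)"
    using integral_distr[OF Zm[of 0] hm] distr[of 0] by simp
  interpret H: Hoeffding_ineq_iid M I "\<lambda>i \<omega>. h (Z i \<omega>)" "\<lambda>\<omega>. h (Z 0 \<omega>)" 0 K "\<integral>x. h x \<partial>P0"
  proof unfold_locales
    show "finite I" by fact
    show "indep_vars (\<lambda>_. borel) (\<lambda>i \<omega>. h (Z i \<omega>)) I"
      by (rule indep_vars_compose2[OF indep_vars_subset[OF indep]]) auto
    show "distr M borel (\<lambda>\<omega>. h (Z i \<omega>)) = distr M borel (\<lambda>\<omega>. h (Z 0 \<omega>))" for i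
    proof -
      have "distr M borel (\<lambda>\<omega>. h (Z i \<omega>)) = distr (distr M P0 (Z i)) borel h"
        by (subst distr_distr) (auto simp: comp_def)
      also have "\<dots> = distr (distr M P0 (Z 0)) borel h" by (simp add: distr)
      also have "\<dots> = distr M borel (\<lambda>\<omega>. h (Z 0 \<omega>))"
        by (subst distr_distr) (auto simp: comp_def)
      finally show ?thesis .
    qed
    show "random_variable borel (\<lambda>\<omega>. h (Z 0 \<omega>))" by measurable
    show "AE x in M. h (Z 0 x) \<in> {0..K}" using hb by auto
    show "(\<integral>x. h x \<partial>P0) \<equiv> expectation (\<lambda>\<omega>. h (Z 0 \<omega>))" using ex by simp
  qed
  show ?thesis using H.Hoeffding_ineq_abs_ge'[OF e K I(2)] by simp
qed

lemma aux4: "e < \<bar>a + b - (p + q)\<bar> \<Longrightarrow> 0 \<le> b \<Longrightarrow> 0 \<le> q \<Longrightarrow> q < d \<Longrightarrow> d \<le> e/3 \<Longrightarrow> e/3 \<le> \<bar>a - p\<bar> \<or> e/3 \<le> (b::real)"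
  by (auto simp: abs_if split: if_splits)

lemma exp_lim0:
  assumes "c > 0"
  shows "(\<lambda>N::nat. 2 * exp (- c * real N)) \<longlonglongrightarrow> 0"
proof -
  have "filterlim (\<lambda>N::nat. - c * real N) at_bot sequentially"
    using assms by (intro filterlim_tendsto_neg_mult_at_bot[OF tendsto_const] filterlim_real_sequentially) auto
  hence "(\<lambda>N::nat. exp (- c * real N)) \<longlonglongrightarrow> 0"
    by (rule filterlim_compose[OF exp_at_bot])
  thus ?thesis using tendsto_mult_right_zero[of _ sequentially 2] by (simp add: mult.commute)
qed

lemma wlln:
  fixes M :: "'a measure" and P0 :: "'z measure" and Z :: "nat \<Rightarrow> 'a \<Rightarrow> 'z" and f :: "'z \<Rightarrow> real"
    and I :: "'i \<Rightarrow> nat set"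
  assumes M: "prob_space M"
    and indep: "prob_space.indep_vars M (\<lambda>_. P0) Z UNIV"
    and distr: "\<And>i. distr M P0 (Z i) = P0"
    and fm: "f \<in> borel_measurable P0" and fpos: "\<And>x. 0 \<le> f x" and fint: "integrable P0 f"
    and fin: "\<And>n. finite (I n)"
    and card: "filterlim (\<lambda>n. card (I n)) at_top F"
  shows "conv_in_prob M F (\<lambda>n \<omega>. (\<Sum>i\<in>I n. f (Z i \<omega>)) / real (card (I n))) (\<integral>x. f x \<partial>P0)"
  unfolding conv_in_prob_def
proof (intro allI impI)
  interpret prob_space M by fact
  have Zm[measurable]: "Z i \<in> measurable M P0" for i
    using indep unfolding indep_vars_def by auto
  note fm[measurable]
  fix \<epsilon> :: real assume \<epsilon>: "\<epsilon> > 0"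
  show "((\<lambda>n. measure M {\<omega> \<in> space M. \<epsilon> < \<bar>(\<Sum>i\<in>I n. f (Z i \<omega>)) / real (card (I n)) - (\<integral>x. f x \<partial>P0)\<bar>}) \<longlongrightarrow> 0) F"
  proof (rule order_tendstoI)
    fix a :: real assume "a < 0"
    thus "\<forall>\<^sub>F n in F. a < measure M {\<omega> \<in> space M. \<epsilon> < \<bar>(\<Sum>i\<in>I n. f (Z i \<omega>)) / real (card (I n)) - (\<integral>x. f x \<partial>P0)\<bar>}"
      by (intro always_eventually) (auto intro: less_le_trans[OF _ measure_nonneg])
  next
    fix \<eta> :: real assume \<eta>: "\<eta> > 0"
    define \<delta> where "\<delta> = min (\<epsilon>/3) (\<epsilon> * \<eta> / 6)"
    have \<delta>: "\<delta> > 0" using \<epsilon> \<eta> unfolding \<delta>_def by auto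
    have lim: "(\<lambda>K::nat. \<integral>x. f x - min (f x) (real K) \<partial>P0) \<longlonglongrightarrow> (\<integral>x. 0 \<partial>P0)"
    proof (rule integral_dominated_convergence[where w = f])
      show "AE x in P0. (\<lambda>K::nat. f x - min (f x) (real K)) \<longlonglongrightarrow> 0"
      proof (intro AE_I2)
        fix x
        have "eventually (\<lambda>K::nat. f x - min (f x) (real K) = 0) sequentially"
          using eventually_ge_at_top[of "nat \<lceil>f x\<rceil>"]
        proof eventually_elim
          case (elim K)
          have "f x \<le> real (nat \<lceil>f x\<rceil>)" by (rule real_nat_ceiling_ge)
          also have "\<dots> \<le> real K" using elim by simp
          finally show ?case by simp
        qed
        thus "(\<lambda>K::nat. f x - min (f x) (real K)) \<longlonglongrightarrow> 0" by (rule tendsto_eventually)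
      qed
      show "AE x in P0. norm (f x - min (f x) (real K)) \<le> f x" for K :: nat
        using fpos by (intro AE_I2) (auto simp: min_def)
    qed (use fint in auto)
    hence "eventually (\<lambda>K::nat. (\<integral>x. f x - min (f x) (real K) \<partial>P0) < \<delta>) sequentially"
      using \<delta> by (intro order_tendstoD(2)) auto
    then obtain K0 where K0: "\<And>K. K \<ge> K0 \<Longrightarrow> (\<integral>x. f x - min (f x) (real K) \<partial>P0) < \<delta>"
      by (auto simp: eventually_sequentially)
    define K :: real where "K = real (Suc K0)"
    have K: "K > 0" unfolding K_def by auto
    have Kr: "(\<integral>x. f x - min (f x) K \<partial>P0) < \<delta>" unfolding K_def using K0[of "Suc K0"] by simp
    define h where "h x = min (f x) K" for x
    define r where "r x = f x - h x" for x
    have hm[measurable]: "h \<in> borel_measurable P0" unfolding h_def by measurable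
    have rm[measurable]: "r \<in> borel_measurable P0" unfolding r_def by measurable
    have hb: "0 \<le> h x" "h x \<le> K" for x unfolding h_def using fpos[of x] K by auto
    have rpos: "0 \<le> r x" for x unfolding r_def h_def by auto
    have P0p: "prob_space P0" using prob_space_distr[OF Zm[of 0]] distr[of 0] by simp
    interpret P0: prob_space P0 by fact
    have hint: "integrable P0 h"
      by (rule P0.integrable_const_bound[where B = K]) (use hb in auto)
    have rint: "integrable P0 r" unfolding r_def using fint hint by auto
    have Er: "(\<integral>x. r x \<partial>P0) < \<delta>" using Kr unfolding r_def h_def .
    have Ef: "(\<integral>x. f x \<partial>P0) = (\<integral>x. h x \<partial>P0) + (\<integral>x. r x \<partial>P0)"
      using fint hint unfolding r_def by simp
    have rZint: "integrable M (\<lambda>\<omega>. r (Z i \<omega>))" for i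
      using integrable_distr_eq[OF Zm[of i] rm] rint distr[of i] by simp
    have rZE: "(\<integral>\<omega>. r (Z i \<omega>) \<partial>M) = (\<integral>x. r x \<partial>P0)" for i
      using integral_distr[OF Zm[of i] rm] distr[of i] by simp
    define c where "c = 2 * (\<epsilon>/3)\<^sup>2 / K\<^sup>2"
    have c: "c > 0" unfolding c_def using \<epsilon> K by auto
    have "((\<lambda>n. 2 * exp (- c * real (card (I n)))) \<longlongrightarrow> 0) F"
      by (rule filterlim_compose[OF exp_lim0[OF c] card])
    hence ev1: "\<forall>\<^sub>F n in F. 2 * exp (- c * real (card (I n))) < \<eta>/2"
      using \<eta> by (intro order_tendstoD(2)) auto
    have ev2: "\<forall>\<^sub>F n in F. 1 \<le> card (I n)"
      using card unfolding filterlim_at_top by auto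
    show "\<forall>\<^sub>F n in F. measure M {\<omega> \<in> space M. \<epsilon> < \<bar>(\<Sum>i\<in>I n. f (Z i \<omega>)) / real (card (I n)) - (\<integral>x. f x \<partial>P0)\<bar>} < \<eta>"
      using ev1 ev2
    proof eventually_elim
      case (elim n)
      define N where "N = card (I n)"
      have N: "N \<ge> 1" "I n \<noteq> {}" using elim(2) unfolding N_def by auto
      define T1 where "T1 = {\<omega>\<in>space M. \<epsilon>/3 \<le> \<bar>(\<Sum>i\<in>I n. h (Z i \<omega>)) / real N - (\<integral>x. h x \<partial>P0)\<bar>}"
      define T2 where "T2 = {\<omega>\<in>space M. \<epsilon>/3 \<le> (\<Sum>i\<in>I n. r (Z i \<omega>)) / real N}"
      have T1m: "T1 \<in> sets M" unfolding T1_def by measurable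
      have T2m: "T2 \<in> sets M" unfolding T2_def by measurable
      have m1: "measure M T1 \<le> 2 * exp (- 2 * real N * (\<epsilon>/3)\<^sup>2 / K\<^sup>2)"
        unfolding T1_def N_def
        by (rule hoeff_iid[OF M indep distr hm hb K fin N(2)]) (use \<epsilon> in auto)
      also have "\<dots> = 2 * exp (- c * real (card (I n)))" unfolding c_def N_def by simp
      finally have m1': "measure M T1 < \<eta>/2" using elim(1) by simp
      have uint: "integrable M (\<lambda>\<omega>. (\<Sum>i\<in>I n. r (Z i \<omega>)) / real N)"
        using rZint by auto
      have uE: "(\<integral>\<omega>. (\<Sum>i\<in>I n. r (Z i \<omega>)) / real N \<partial>M) = (\<integral>x. r x \<partial>P0)"
        using rZint rZE N(1) by (simp add: integral_sum N_def[symmetric])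
      have "measure M T2 \<le> (\<integral>\<omega>. (\<Sum>i\<in>I n. r (Z i \<omega>)) / real N \<partial>M) / (\<epsilon>/3)"
        unfolding T2_def
        by (rule integral_Markov_inequality_measure[OF uint sets.top]) (use \<epsilon> rpos in \<open>auto intro!: sum_nonneg AE_I2 divide_nonneg_nonneg\<close>)
      also have "\<dots> = (\<integral>x. r x \<partial>P0) / (\<epsilon>/3)" using uE by simp
      also have "\<dots> < \<delta> / (\<epsilon>/3)" using Er \<epsilon> by (intro divide_strict_right_mono) auto
      also have "\<dots> \<le> (\<epsilon> * \<eta> / 6) / (\<epsilon>/3)" using \<epsilon> unfolding \<delta>_def by (intro divide_right_mono) auto
      also have "\<dots> = \<eta>/2" using \<epsilon> by (simp add: field_simps)
      finally have m2': "measure M T2 < \<eta>/2" .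
      have sub: "{\<omega> \<in> space M. \<epsilon> < \<bar>(\<Sum>i\<in>I n. f (Z i \<omega>)) / real (card (I n)) - (\<integral>x. f x \<partial>P0)\<bar>} \<subseteq> T1 \<union> T2"
      proof
        fix \<omega> assume w: "\<omega> \<in> {\<omega> \<in> space M. \<epsilon> < \<bar>(\<Sum>i\<in>I n. f (Z i \<omega>)) / real (card (I n)) - (\<integral>x. f x \<partial>P0)\<bar>}"
        define a where "a = (\<Sum>i\<in>I n. h (Z i \<omega>)) / real N"
        define b where "b = (\<Sum>i\<in>I n. r (Z i \<omega>)) / real N"
        have fab: "(\<Sum>i\<in>I n. f (Z i \<omega>)) / real (card (I n)) = a + b"
          unfolding a_def b_def N_def r_def by (simp add: sum_subtractf diff_divide_distrib)
        have b0: "b \<ge> 0" unfolding b_def using rpos by (auto intro!: sum_nonneg divide_nonneg_nonneg)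
        have Er0: "(\<integral>x. r x \<partial>P0) \<ge> 0" using rpos by auto
        have "\<epsilon> < \<bar>a + b - ((\<integral>x. h x \<partial>P0) + (\<integral>x. r x \<partial>P0))\<bar>" using w fab Ef by auto
        hence "\<epsilon>/3 \<le> \<bar>a - (\<integral>x. h x \<partial>P0)\<bar> \<or> \<epsilon>/3 \<le> b"
        proof -
          have "\<delta> \<le> \<epsilon>/3" unfolding \<delta>_def by simp
          thus ?thesis using aux4[OF \<open>\<epsilon> < \<bar>a + b - _\<bar>\<close> b0 Er0 Er] by blast
        qed
        thus "\<omega> \<in> T1 \<union> T2" using w unfolding T1_def T2_def a_def b_def by auto
      qed
      have "measure M {\<omega> \<in> space M. \<epsilon> < \<bar>(\<Sum>i\<in>I n. f (Z i \<omega>)) / real (card (I n)) - (\<integral>x. f x \<partial>P0)\<bar>}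
            \<le> measure M T1 + measure M T2"
        by (rule measure_le_union2[OF M sub T1m T2m])
      thus ?case using m1' m2' by linarith
    qed
  qed
qed


lemma per_term:
  fixes M :: "'a measure" and P0 :: "'z measure" and Z :: "nat \<Rightarrow> 'a \<Rightarrow> 'z"
    and H :: "(nat \<Rightarrow> 'z) \<Rightarrow> 'z \<Rightarrow> real"
  assumes M: "prob_space M"
    and indep: "prob_space.indep_vars M (\<lambda>_. P0) Z UNIV"
    and distr: "\<And>i. distr M P0 (Z i) = P0"
    and Hm: "(\<lambda>(x, z). H x z) \<in> borel_measurable (PiM J (\<lambda>_. P0) \<Otimes>\<^sub>M P0)"
    and J: "finite J" "i \<notin> J" and \<delta>: "\<delta> \<ge> 0"
  shows "(\<integral>\<^sup>+\<omega>. ennreal (H (restrict (\<lambda>j. Z j \<omega>) J) (Z i \<omega>)) *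
            (if (\<integral>\<^sup>+z. ennreal (H (restrict (\<lambda>j. Z j \<omega>) J) z) \<partial>P0) \<le> ennreal \<delta> then 1 else 0) \<partial>M) \<le> ennreal \<delta>"
proof -
  interpret prob_space M by fact
  have Zm[measurable]: "Z i \<in> measurable M P0" for i
    using indep unfolding indep_vars_def by auto
  have P0p: "prob_space P0" using prob_space_distr[OF Zm[of 0]] distr[of 0] by simp
  interpret P0: prob_space P0 by fact
  interpret PS: product_prob_space "\<lambda>_::nat. P0" UNIV
    by (simp add: product_prob_space_def product_prob_space_axioms_def product_sigma_finite_def
        P0.sigma_finite_measure_axioms P0p)
  define L where "L x = (\<integral>\<^sup>+z. ennreal (H x z) \<partial>P0)" for x
  define F where "F x z = ennreal (H x z) * (if L x \<le> ennreal \<delta> then 1 else 0)" for x z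
  define K where "K = insert i J"
  have JK: "J \<subseteq> K" "i \<in> K" "finite K" "K \<noteq> {}" using J unfolding K_def by auto
  have Hm': "(\<lambda>p. H (fst p) (snd p)) \<in> borel_measurable (PiM J (\<lambda>_. P0) \<Otimes>\<^sub>M P0)"
    using Hm by (simp add: case_prod_beta')
  have Lm: "L \<in> borel_measurable (PiM J (\<lambda>_. P0))"
    unfolding L_def using Hm' by measurable
  have Fm: "(\<lambda>p. F (fst p) (snd p)) \<in> borel_measurable (PiM J (\<lambda>_. P0) \<Otimes>\<^sub>M P0)"
    unfolding F_def using Hm' Lm by measurable
  have pm: "(\<lambda>y. (restrict y J, y i)) \<in> measurable (PiM K (\<lambda>_. P0)) (PiM J (\<lambda>_. P0) \<Otimes>\<^sub>M P0)"
    using JK by (intro measurable_Pair measurable_restrict_subset measurable_component_singleton) auto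
  have F'm: "(\<lambda>y. F (restrict y J) (y i)) \<in> borel_measurable (PiM K (\<lambda>_. P0))"
    using measurable_comp[OF pm Fm] by (simp add: comp_def)
  have Ym: "(\<lambda>\<omega>. restrict (\<lambda>j. Z j \<omega>) K) \<in> measurable M (PiM K (\<lambda>_. P0))"
    by (intro measurable_restrict Zm)
  have dY: "distr M (PiM K (\<lambda>_. P0)) (\<lambda>\<omega>. restrict (\<lambda>j. Z j \<omega>) K) = PiM K (\<lambda>_. P0)"
  proof -
    have "indep_vars (\<lambda>_. P0) Z K" by (rule indep_vars_subset[OF indep]) auto
    hence "distr M (PiM K (\<lambda>_. P0)) (\<lambda>\<omega>. restrict (\<lambda>j. Z j \<omega>) K) = PiM K (\<lambda>j. distr M P0 (Z j))"
      using indep_vars_iff_distr_eq_PiM'[where I=K and X=Z and M'="\<lambda>_. P0"] JK by auto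
    thus ?thesis by (simp add: distr)
  qed
  have "(\<integral>\<^sup>+\<omega>. ennreal (H (restrict (\<lambda>j. Z j \<omega>) J) (Z i \<omega>)) *
            (if (\<integral>\<^sup>+z. ennreal (H (restrict (\<lambda>j. Z j \<omega>) J) z) \<partial>P0) \<le> ennreal \<delta> then 1 else 0) \<partial>M)
      = (\<integral>\<^sup>+\<omega>. (\<lambda>y. F (restrict y J) (y i)) (restrict (\<lambda>j. Z j \<omega>) K) \<partial>M)"
    using JK by (intro nn_integral_cong) (simp add: F_def L_def restrict_restrict Int_absorb1)
  also have "\<dots> = (\<integral>\<^sup>+y. F (restrict y J) (y i) \<partial>distr M (PiM K (\<lambda>_. P0)) (\<lambda>\<omega>. restrict (\<lambda>j. Z j \<omega>) K))"
    by (rule nn_integral_distr[symmetric, OF Ym]) (use F'm in simp)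
  also have "\<dots> = (\<integral>\<^sup>+y. F (restrict y J) (y i) \<partial>PiM K (\<lambda>_. P0))" by (simp add: dY)
  also have "\<dots> = (\<integral>\<^sup>+x. (\<integral>\<^sup>+z. F (restrict (x(i := z)) J) ((x(i := z)) i) \<partial>P0) \<partial>PiM J (\<lambda>_. P0))"
    unfolding K_def by (rule PS.product_nn_integral_insert[OF J]) (use F'm in \<open>simp add: K_def\<close>)
  also have "\<dots> = (\<integral>\<^sup>+x. (\<integral>\<^sup>+z. F x z \<partial>P0) \<partial>PiM J (\<lambda>_. P0))"
  proof (rule nn_integral_cong)
    fix x assume x: "x \<in> space (PiM J (\<lambda>_. P0))"
    have "restrict (x(i := z)) J = x" for z
      using x J(2) by (auto simp: space_PiM PiE_def extensional_def restrict_def fun_eq_iff)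
    thus "(\<integral>\<^sup>+z. F (restrict (x(i := z)) J) ((x(i := z)) i) \<partial>P0) = (\<integral>\<^sup>+z. F x z \<partial>P0)" by simp
  qed
  also have "\<dots> \<le> (\<integral>\<^sup>+x. ennreal \<delta> \<partial>PiM J (\<lambda>_. P0))"
  proof (rule nn_integral_mono)
    fix x assume x: "x \<in> space (PiM J (\<lambda>_. P0))"
    have "(\<integral>\<^sup>+z. F x z \<partial>P0) = L x * (if L x \<le> ennreal \<delta> then 1 else 0)"
    proof -
      have [measurable]: "(\<lambda>z. H x z) \<in> borel_measurable P0" using measurable_Pair2[OF Hm' x] by simp
      show ?thesis unfolding F_def L_def by (rule nn_integral_multc) measurable
    qed
    also have "\<dots> \<le> ennreal \<delta>" by auto
    finally show "(\<integral>\<^sup>+z. F x z \<partial>P0) \<le> ennreal \<delta>" .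
  qed
  also have "\<dots> = ennreal \<delta>"
    using PS.prob_space_axioms
    by (simp add: prob_space.emeasure_space_1 prob_space_PiM P0p)
  finally show ?thesis .
qed

lemma ennreal_avg_split:
  assumes "\<And>i. i \<in> I \<Longrightarrow> 0 \<le> a i" "N > 0"
  shows "ennreal ((\<Sum>i\<in>I. a i) / real N) * c = (\<Sum>i\<in>I. ennreal (a i) * c) * ennreal (1 / real N)"
proof -
  have "(\<Sum>i\<in>I. a i) / real N = (\<Sum>i\<in>I. a i) * (1 / real N)" by simp
  moreover have "0 \<le> (\<Sum>i\<in>I. a i)" using assms by (simp add: sum_nonneg)
  ultimately have "ennreal ((\<Sum>i\<in>I. a i) / real N) = ennreal (\<Sum>i\<in>I. a i) * ennreal (1 / real N)"
    by (metis ennreal_mult of_nat_0_le_iff zero_le_divide_1_iff)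
  also have "ennreal (\<Sum>i\<in>I. a i) = (\<Sum>i\<in>I. ennreal (a i))" using assms by (simp add: sum_ennreal)
  finally show ?thesis by (simp add: sum_distrib_left sum_distrib_right mult_ac)
qed

lemma cond_markov:
  fixes M :: "'a measure" and P0 :: "'z measure" and Z :: "nat \<Rightarrow> 'a \<Rightarrow> 'z"
    and \<phi>0 :: "'z \<Rightarrow> 'h::{real_inner, polish_space}" and g :: "(nat \<Rightarrow> 'z) \<Rightarrow> 'z \<Rightarrow> 'h"
  assumes M: "prob_space M"
    and indep: "prob_space.indep_vars M (\<lambda>_. P0) Z UNIV"
    and distr: "\<And>i. distr M P0 (Z i) = P0"
    and \<phi>0m: "\<phi>0 \<in> borel_measurable P0"
    and gm: "(\<lambda>(x, z). g x z) \<in> borel_measurable (PiM J (\<lambda>_. P0) \<Otimes>\<^sub>M P0)"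
    and J: "finite J" and I: "finite I" and IJ: "I \<inter> J = {}" and \<epsilon>: "\<epsilon> > 0" and \<delta>: "\<delta> > 0"
  shows "measure M {\<omega>\<in>space M. \<epsilon> < (\<Sum>i\<in>I. (norm (g (restrict (\<lambda>j. Z j \<omega>) J) (Z i \<omega>) - \<phi>0 (Z i \<omega>)))\<^sup>2) / real (card I)}
     \<le> measure M {\<omega>\<in>space M. ennreal \<delta> < L2sq P0 (\<lambda>z. g (restrict (\<lambda>j. Z j \<omega>) J) z - \<phi>0 z)} + \<delta> / \<epsilon>"
proof -
  interpret prob_space M by fact
  have Zm[measurable]: "Z i \<in> measurable M P0" for i
    using indep unfolding indep_vars_def by auto
  have P0p: "prob_space P0" using prob_space_distr[OF Zm[of 0]] distr[of 0] by simp
  interpret P0: prob_space P0 by fact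
  define H where "H x z = (norm (g x z - \<phi>0 z))\<^sup>2" for x z
  have gm': "(\<lambda>p. g (fst p) (snd p)) \<in> borel_measurable (PiM J (\<lambda>_. P0) \<Otimes>\<^sub>M P0)"
    using gm by (simp add: case_prod_beta')
  note \<phi>0m[measurable]
  have Hm': "(\<lambda>p. H (fst p) (snd p)) \<in> borel_measurable (PiM J (\<lambda>_. P0) \<Otimes>\<^sub>M P0)"
    unfolding H_def using gm' by measurable
  have Hm: "(\<lambda>(x, z). H x z) \<in> borel_measurable (PiM J (\<lambda>_. P0) \<Otimes>\<^sub>M P0)"
    using Hm' by (simp add: case_prod_beta')
  define X where "X \<omega> = restrict (\<lambda>j. Z j \<omega>) J" for \<omega>
  have Xm: "X \<in> measurable M (PiM J (\<lambda>_. P0))" unfolding X_def by (intro measurable_restrict Zm)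
  have HXm: "(\<lambda>\<omega>. H (X \<omega>) (Z i \<omega>)) \<in> borel_measurable M" for i
    using measurable_comp[OF measurable_Pair[OF Xm Zm[of i]] Hm'] by (simp add: comp_def)
  have Lm: "(\<lambda>x. \<integral>\<^sup>+z. ennreal (H x z) \<partial>P0) \<in> borel_measurable (PiM J (\<lambda>_. P0))"
    using Hm' by measurable
  define Lw where "Lw \<omega> = (\<integral>\<^sup>+z. ennreal (H (X \<omega>) z) \<partial>P0)" for \<omega>
  have Lwm: "Lw \<in> borel_measurable M"
    using measurable_comp[OF Xm Lm] unfolding Lw_def by (simp add: comp_def)
  have LwL2: "L2sq P0 (\<lambda>z. g (restrict (\<lambda>j. Z j \<omega>) J) z - \<phi>0 z) = Lw \<omega>" for \<omega>
    unfolding L2sq_def Lw_def H_def X_def ..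
  define D where "D \<omega> = (\<Sum>i\<in>I. H (X \<omega>) (Z i \<omega>)) / real (card I)" for \<omega>
  have Dm: "D \<in> borel_measurable M" unfolding D_def using HXm by measurable
  have DS: "(\<Sum>i\<in>I. (norm (g (restrict (\<lambda>j. Z j \<omega>) J) (Z i \<omega>) - \<phi>0 (Z i \<omega>)))\<^sup>2) / real (card I) = D \<omega>" for \<omega>
    unfolding D_def H_def X_def ..
  define A where "A = {\<omega>\<in>space M. \<epsilon> < D \<omega> \<and> Lw \<omega> \<le> ennreal \<delta>}"
  define B where "B = {\<omega>\<in>space M. ennreal \<delta> < Lw \<omega>}"
  have Am: "A \<in> sets M" unfolding A_def using Dm Lwm by measurable
  have Bm: "B \<in> sets M" unfolding B_def using Lwm by measurable
  have sub: "{\<omega>\<in>space M. \<epsilon> < D \<omega>} \<subseteq> A \<union> B" unfolding A_def B_def by (auto simp: not_less)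
  have mA: "measure M A \<le> \<delta> / \<epsilon>"
  proof (cases "I = {}")
    case True
    hence "A = {}" unfolding A_def D_def using \<epsilon> by auto
    thus ?thesis using \<epsilon> \<delta> by simp
  next
    case False
    define N where "N = card I"
    have N: "N > 0" using False I unfolding N_def by auto
    define c where "c \<omega> = (if Lw \<omega> \<le> ennreal \<delta> then 1 else 0 :: ennreal)" for \<omega>
    have "ennreal \<epsilon> * emeasure M A = (\<integral>\<^sup>+\<omega>. ennreal \<epsilon> * indicator A \<omega> \<partial>M)"
      by (rule nn_integral_cmult_indicator[symmetric, OF Am])
    also have "\<dots> \<le> (\<integral>\<^sup>+\<omega>. ennreal (D \<omega>) * c \<omega> \<partial>M)"
    proof (rule nn_integral_mono)
      fix \<omega> assume "\<omega> \<in> space M"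
      show "ennreal \<epsilon> * indicator A \<omega> \<le> ennreal (D \<omega>) * c \<omega>"
        unfolding A_def c_def indicator_def by (auto intro: ennreal_leI less_imp_le)
    qed
    also have "\<dots> = (\<integral>\<^sup>+\<omega>. (\<Sum>i\<in>I. ennreal (H (X \<omega>) (Z i \<omega>)) * c \<omega>) * ennreal (1 / real N) \<partial>M)"
      unfolding D_def N_def
      by (rule nn_integral_cong, rule ennreal_avg_split) (use N in \<open>auto simp: H_def N_def\<close>)
    also have "\<dots> = (\<Sum>i\<in>I. (\<integral>\<^sup>+\<omega>. ennreal (H (X \<omega>) (Z i \<omega>)) * c \<omega> \<partial>M)) * ennreal (1 / real N)"
    proof -
      have cm: "c \<in> borel_measurable M" unfolding c_def using Lwm by measurable
      have "(\<integral>\<^sup>+\<omega>. (\<Sum>i\<in>I. ennreal (H (X \<omega>) (Z i \<omega>)) * c \<omega>) * ennreal (1 / real N) \<partial>M)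
          = (\<integral>\<^sup>+\<omega>. (\<Sum>i\<in>I. ennreal (H (X \<omega>) (Z i \<omega>)) * c \<omega>) \<partial>M) * ennreal (1 / real N)"
        by (rule nn_integral_multc) (use HXm cm in measurable)
      also have "(\<integral>\<^sup>+\<omega>. (\<Sum>i\<in>I. ennreal (H (X \<omega>) (Z i \<omega>)) * c \<omega>) \<partial>M)
          = (\<Sum>i\<in>I. (\<integral>\<^sup>+\<omega>. ennreal (H (X \<omega>) (Z i \<omega>)) * c \<omega> \<partial>M))"
        by (rule nn_integral_sum) (use HXm cm in measurable)
      finally show ?thesis .
    qed
    also have "\<dots> \<le> (\<Sum>i\<in>I. ennreal \<delta>) * ennreal (1 / real N)"
    proof (intro mult_right_mono sum_mono)
      fix i assume i: "i \<in> I"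
      hence iJ: "i \<notin> J" using IJ by auto
      show "(\<integral>\<^sup>+\<omega>. ennreal (H (X \<omega>) (Z i \<omega>)) * c \<omega> \<partial>M) \<le> ennreal \<delta>"
        using per_term[OF M indep distr Hm J iJ, of \<delta>] \<delta> unfolding c_def Lw_def X_def by simp
    qed auto
    also have "\<dots> = ennreal \<delta>"
      using N \<delta> by (simp add: N_def[symmetric] ennreal_of_nat_eq_real_of_nat ennreal_mult[symmetric])
    finally have le: "ennreal \<epsilon> * emeasure M A \<le> ennreal \<delta>" .
    hence "ennreal (\<epsilon> * measure M A) \<le> ennreal \<delta>"
      using \<epsilon> by (simp add: emeasure_eq_measure ennreal_mult)
    hence "\<epsilon> * measure M A \<le> \<delta>" using \<delta> by (simp add: ennreal_le_iff)
    thus ?thesis using \<epsilon> by (simp add: field_simps)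
  qed
  have "measure M {\<omega>\<in>space M. \<epsilon> < D \<omega>} \<le> measure M A + measure M B"
    by (rule measure_le_union2[OF M sub Am Bm])
  thus ?thesis using mA unfolding DS LwL2 B_def by simp
qed


lemma emp_bound:
  fixes f f0 :: "'z \<Rightarrow> 'h::real_inner"
  assumes t: "t > 0"
  shows "\<bar>empL2sq I X f - empL2sq I X f0\<bar> \<le> t * \<bar>empL2sq I X f0\<bar> + (1 + 1/t) * empL2sq I X (\<lambda>z. f z - f0 z)"
proof -
  define x where "x i = (norm (f (X i)))\<^sup>2" for i
  define y where "y i = (norm (f0 (X i)))\<^sup>2" for i
  define d where "d i = (norm (f (X i) - f0 (X i)))\<^sup>2" for i
  define N where "N = real (card I)"
  have N: "N \<ge> 0" unfolding N_def by simp
  have y0: "0 \<le> sum y I" unfolding y_def by (auto intro: sum_nonneg)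
  have pt: "\<bar>x i - y i\<bar> \<le> t * y i + (1 + 1/t) * d i" for i
    using norm_sq_diff_bound[OF t, of "f0 (X i)" "f (X i) - f0 (X i)"] unfolding x_def y_def d_def by simp
  have "\<bar>sum x I - sum y I\<bar> \<le> (\<Sum>i\<in>I. \<bar>x i - y i\<bar>)"
    by (metis sum_abs sum_subtractf)
  also have "\<dots> \<le> (\<Sum>i\<in>I. t * y i + (1 + 1/t) * d i)" by (intro sum_mono pt)
  also have "\<dots> = t * sum y I + (1 + 1/t) * sum d I" by (simp add: sum.distrib sum_distrib_left)
  finally have s: "\<bar>sum x I - sum y I\<bar> \<le> t * sum y I + (1 + 1/t) * sum d I" .
  have "\<bar>sum x I / N - sum y I / N\<bar> = \<bar>sum x I - sum y I\<bar> / N"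
    using N by (simp add: diff_divide_distrib[symmetric])
  also have "\<dots> \<le> (t * sum y I + (1 + 1/t) * sum d I) / N" using s N by (rule divide_right_mono)
  also have "\<dots> = t * \<bar>sum y I / N\<bar> + (1 + 1/t) * (sum d I / N)"
    using y0 N by (simp add: add_divide_distrib)
  finally show ?thesis unfolding empL2sq_def x_def y_def d_def N_def .
qed

lemma emp_meas:
  fixes M :: "'a measure" and P0 :: "'z measure" and Z :: "nat \<Rightarrow> 'a \<Rightarrow> 'z"
    and \<phi>0 :: "'z \<Rightarrow> 'h::{real_inner, polish_space}" and g :: "(nat \<Rightarrow> 'z) \<Rightarrow> 'z \<Rightarrow> 'h"
  assumes Zm: "\<And>i. Z i \<in> measurable M P0"
    and \<phi>0m: "\<phi>0 \<in> borel_measurable P0"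
    and gm: "(\<lambda>(x, z). g x z) \<in> borel_measurable (PiM J (\<lambda>_. P0) \<Otimes>\<^sub>M P0)"
  shows "(\<lambda>\<omega>. empL2sq I (\<lambda>i. Z i \<omega>) (g (restrict (\<lambda>j. Z j \<omega>) J))) \<in> borel_measurable M"
    and "(\<lambda>\<omega>. empL2sq I (\<lambda>i. Z i \<omega>) (\<lambda>z. g (restrict (\<lambda>j. Z j \<omega>) J) z - \<phi>0 z)) \<in> borel_measurable M"
    and "(\<lambda>\<omega>. empL2sq I (\<lambda>i. Z i \<omega>) \<phi>0) \<in> borel_measurable M"
proof -
  note Zm[measurable] \<phi>0m[measurable]
  have gm': "(\<lambda>p. g (fst p) (snd p)) \<in> borel_measurable (PiM J (\<lambda>_. P0) \<Otimes>\<^sub>M P0)"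
    using gm by (simp add: case_prod_beta')
  have Xm: "(\<lambda>\<omega>. restrict (\<lambda>j. Z j \<omega>) J) \<in> measurable M (PiM J (\<lambda>_. P0))" by (intro measurable_restrict Zm)
  have [measurable]: "(\<lambda>\<omega>. g (restrict (\<lambda>j. Z j \<omega>) J) (Z i \<omega>)) \<in> borel_measurable M" for i
    using measurable_comp[OF measurable_Pair[OF Xm Zm[of i]] gm'] by (simp add: comp_def)
  show "(\<lambda>\<omega>. empL2sq I (\<lambda>i. Z i \<omega>) (g (restrict (\<lambda>j. Z j \<omega>) J))) \<in> borel_measurable M"
    unfolding empL2sq_def by measurable
  show "(\<lambda>\<omega>. empL2sq I (\<lambda>i. Z i \<omega>) (\<lambda>z. g (restrict (\<lambda>j. Z j \<omega>) J) z - \<phi>0 z)) \<in> borel_measurable M"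
    unfolding empL2sq_def by measurable
  show "(\<lambda>\<omega>. empL2sq I (\<lambda>i. Z i \<omega>) \<phi>0) \<in> borel_measurable M"
    unfolding empL2sq_def by measurable
qed

lemma D_conv:
  fixes M :: "'a measure" and P0 :: "'z measure" and Z :: "nat \<Rightarrow> 'a \<Rightarrow> 'z"
    and \<phi>0 :: "'z \<Rightarrow> 'h::{real_inner, polish_space}" and g :: "'i \<Rightarrow> (nat \<Rightarrow> 'z) \<Rightarrow> 'z \<Rightarrow> 'h"
  assumes M: "prob_space M"
    and indep: "prob_space.indep_vars M (\<lambda>_. P0) Z UNIV"
    and distr: "\<And>i. distr M P0 (Z i) = P0"
    and \<phi>0m: "\<phi>0 \<in> borel_measurable P0"
    and gm: "\<And>n. (\<lambda>(x, z). g n x z) \<in> borel_measurable (PiM (J n) (\<lambda>_. P0) \<Otimes>\<^sub>M P0)"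
    and J: "\<And>n. finite (J n)" and I: "\<And>n. finite (I n)" and IJ: "\<And>n. I n \<inter> J n = {}"
    and cons: "op1_enn M F (\<lambda>n \<omega>. L2sq P0 (\<lambda>z. g n (restrict (\<lambda>j. Z j \<omega>) (J n)) z - \<phi>0 z))"
  shows "conv_in_prob M F (\<lambda>n \<omega>. empL2sq (I n) (\<lambda>i. Z i \<omega>) (\<lambda>z. g n (restrict (\<lambda>j. Z j \<omega>) (J n)) z - \<phi>0 z)) 0"
  unfolding conv_in_prob_def
proof (intro allI impI)
  interpret prob_space M by fact
  fix \<epsilon> :: real assume \<epsilon>: "\<epsilon> > 0"
  show "((\<lambda>n. measure M {\<omega> \<in> space M. \<epsilon> < \<bar>empL2sq (I n) (\<lambda>i. Z i \<omega>) (\<lambda>z. g n (restrict (\<lambda>j. Z j \<omega>) (J n)) z - \<phi>0 z) - 0\<bar>}) \<longlongrightarrow> 0) F"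
  proof (rule order_tendstoI)
    fix a :: real assume "a < 0"
    thus "\<forall>\<^sub>F n in F. a < measure M {\<omega> \<in> space M. \<epsilon> < \<bar>empL2sq (I n) (\<lambda>i. Z i \<omega>) (\<lambda>z. g n (restrict (\<lambda>j. Z j \<omega>) (J n)) z - \<phi>0 z) - 0\<bar>}"
      by (intro always_eventually) (auto intro: less_le_trans[OF _ measure_nonneg])
  next
    fix \<eta> :: real assume \<eta>: "\<eta> > 0"
    define \<delta> where "\<delta> = \<eta> * \<epsilon> / 3"
    have \<delta>: "\<delta> > 0" unfolding \<delta>_def using \<eta> \<epsilon> by auto
    have "\<forall>\<^sub>F n in F. measure M {\<omega>\<in>space M. ennreal \<delta> < L2sq P0 (\<lambda>z. g n (restrict (\<lambda>j. Z j \<omega>) (J n)) z - \<phi>0 z)} < \<eta>/2"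
      using cons \<delta> \<eta> unfolding op1_enn_def by (intro order_tendstoD(2)) auto
    thus "\<forall>\<^sub>F n in F. measure M {\<omega> \<in> space M. \<epsilon> < \<bar>empL2sq (I n) (\<lambda>i. Z i \<omega>) (\<lambda>z. g n (restrict (\<lambda>j. Z j \<omega>) (J n)) z - \<phi>0 z) - 0\<bar>} < \<eta>"
    proof eventually_elim
      case (elim n)
      have nn: "empL2sq (I n) (\<lambda>i. Z i \<omega>) (\<lambda>z. g n (restrict (\<lambda>j. Z j \<omega>) (J n)) z - \<phi>0 z) \<ge> 0" for \<omega>
        unfolding empL2sq_def by (intro divide_nonneg_nonneg sum_nonneg) auto
      have "measure M {\<omega> \<in> space M. \<epsilon> < \<bar>empL2sq (I n) (\<lambda>i. Z i \<omega>) (\<lambda>z. g n (restrict (\<lambda>j. Z j \<omega>) (J n)) z - \<phi>0 z) - 0\<bar>}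
          = measure M {\<omega>\<in>space M. \<epsilon> < (\<Sum>i\<in>I n. (norm (g n (restrict (\<lambda>j. Z j \<omega>) (J n)) (Z i \<omega>) - \<phi>0 (Z i \<omega>)))\<^sup>2) / real (card (I n))}"
        using nn by (simp only: diff_zero abs_of_nonneg) (simp only: empL2sq_def)
      also have "\<dots> \<le> measure M {\<omega>\<in>space M. ennreal \<delta> < L2sq P0 (\<lambda>z. g n (restrict (\<lambda>j. Z j \<omega>) (J n)) z - \<phi>0 z)} + \<delta> / \<epsilon>"
        by (rule cond_markov[OF M indep distr \<phi>0m gm J I IJ \<epsilon> \<delta>])
      also have "\<dots> < \<eta>/2 + \<eta>/3" using elim \<epsilon> unfolding \<delta>_def by simp
      also have "\<dots> < \<eta>" using \<eta> by simp
      finally show ?case .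
    qed
  qed
qed


theorem lemmaS14:
  fixes M :: "'a measure"
    and P0 :: "'z::polish_space measure"
    and Z :: "nat \<Rightarrow> 'a \<Rightarrow> 'z"
    and \<phi>0 :: "'z \<Rightarrow> 'h::{real_inner, polish_space}"
    and g1 g2 :: "nat \<Rightarrow> (nat \<Rightarrow> 'z) \<Rightarrow> 'z \<Rightarrow> 'h"
    and \<phi>1 \<phi>2 :: "nat \<Rightarrow> 'a \<Rightarrow> 'z \<Rightarrow> 'h"
  assumes M: "prob_space M"
    and P0: "prob_space P0" "sets P0 = sets borel"
    and Z_indep: "prob_space.indep_vars M (\<lambda>_. P0) Z UNIV"
    and Z_distr: "\<And>i. distr M P0 (Z i) = P0"
    and \<phi>0_meas: "\<phi>0 \<in> borel_measurable P0"
    and g1_meas: "\<And>n. (\<lambda>(x, z). g1 n x z) \<in> borel_measurable (PiM {..<n div 2} (\<lambda>_. P0) \<Otimes>\<^sub>M P0)"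
    and g2_meas: "\<And>n. (\<lambda>(x, z). g2 n x z) \<in> borel_measurable (PiM {n div 2..<n} (\<lambda>_. P0) \<Otimes>\<^sub>M P0)"
    and \<phi>1_def: "\<And>n \<omega>. \<phi>1 n \<omega> = g1 n (restrict (\<lambda>i. Z i \<omega>) {..<n div 2})"
    and \<phi>2_def: "\<And>n \<omega>. \<phi>2 n \<omega> = g2 n (restrict (\<lambda>i. Z i \<omega>) {n div 2..<n})"
    and \<phi>0_L2: "L2sq P0 \<phi>0 < \<infinity>"
    and cons1: "op1_enn M even_seq (\<lambda>n \<omega>. L2sq P0 (\<lambda>z. \<phi>1 n \<omega> z - \<phi>0 z))"
    and cons2: "op1_enn M even_seq (\<lambda>n \<omega>. L2sq P0 (\<lambda>z. \<phi>2 n \<omega> z - \<phi>0 z))"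
  shows "conv_in_prob M even_seq
           (\<lambda>n \<omega>. empL2sq {n div 2..<n} (\<lambda>i. Z i \<omega>) (\<phi>1 n \<omega>)) (enn2real (L2sq P0 \<phi>0))
       \<and> conv_in_prob M even_seq
           (\<lambda>n \<omega>. empL2sq {..<n div 2} (\<lambda>i. Z i \<omega>) (\<phi>2 n \<omega>)) (enn2real (L2sq P0 \<phi>0))
       \<and> conv_in_prob M even_seq
           (\<lambda>n \<omega>. (1/2) * (empL2sq {n div 2..<n} (\<lambda>i. Z i \<omega>) (\<phi>1 n \<omega>)
                           + empL2sq {..<n div 2} (\<lambda>i. Z i \<omega>) (\<phi>2 n \<omega>)))
           (enn2real (L2sq P0 \<phi>0))"
proof -
  interpret prob_space M by fact
  have Zm[measurable]: "Z i \<in> measurable M P0" for i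
    using Z_indep unfolding indep_vars_def by auto
  have P0p: "prob_space P0" by fact
  interpret P0: prob_space P0 by fact
  have \<phi>1eq: "\<phi>1 = (\<lambda>n \<omega>. g1 n (restrict (\<lambda>i. Z i \<omega>) {..<n div 2}))"
    using \<phi>1_def by (intro ext) simp
  have \<phi>2eq: "\<phi>2 = (\<lambda>n \<omega>. g2 n (restrict (\<lambda>i. Z i \<omega>) {n div 2..<n}))"
    using \<phi>2_def by (intro ext) simp
  define f where "f z = (norm (\<phi>0 z))\<^sup>2" for z
  note \<phi>0_meas[measurable]
  have fm[measurable]: "f \<in> borel_measurable P0" unfolding f_def by measurable
  have fpos: "0 \<le> f z" for z unfolding f_def by simp
  have fL2: "(\<integral>\<^sup>+z. ennreal (f z) \<partial>P0) = L2sq P0 \<phi>0" unfolding f_def L2sq_def ..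
  have fint: "integrable P0 f"
    by (rule integrableI_bounded) (use fm fpos fL2 \<phi>0_L2 in auto)
  have ceq: "(\<integral>z. f z \<partial>P0) = enn2real (L2sq P0 \<phi>0)"
    using integral_eq_nn_integral[OF fm] fpos fL2 by simp
  have evs: "even_seq \<le> sequentially" unfolding even_seq_def by simp
  have F1: "filterlim (\<lambda>n. card {n div 2..<n}) at_top even_seq"
  proof (rule filterlim_mono[OF _ order_refl evs])
    show "filterlim (\<lambda>n. card {n div 2..<n}) at_top sequentially"
      unfolding filterlim_at_top eventually_sequentially
    proof
      fix c :: nat
      show "\<exists>N. \<forall>n\<ge>N. c \<le> card {n div 2..<(n::nat)}"
      proof (rule exI[of _ "2 * c"], intro allI impI)
        fix n :: nat assume "2 * c \<le> n"
        hence "c \<le> n - n div 2" by presburger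
        thus "c \<le> card {n div 2..<n}" by simp
      qed
    qed
  qed
  have F2: "filterlim (\<lambda>n. card {..<n div 2}) at_top even_seq"
  proof (rule filterlim_mono[OF _ order_refl evs])
    show "filterlim (\<lambda>n. card {..<n div 2}) at_top sequentially"
      unfolding filterlim_at_top eventually_sequentially
    proof
      fix c :: nat
      show "\<exists>N. \<forall>n\<ge>N. c \<le> card {..<(n::nat) div 2}"
      proof (rule exI[of _ "2 * c"], intro allI impI)
        fix n :: nat assume "2 * c \<le> n"
        hence "c \<le> n div 2" by presburger
        thus "c \<le> card {..<n div 2}" by simp
      qed
    qed
  qed
  have B1: "conv_in_prob M even_seq (\<lambda>n \<omega>. empL2sq {n div 2..<n} (\<lambda>i. Z i \<omega>) \<phi>0) (enn2real (L2sq P0 \<phi>0))"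
    using wlln[OF M Z_indep Z_distr fm fpos fint _ F1] ceq unfolding empL2sq_def f_def by simp
  have B2: "conv_in_prob M even_seq (\<lambda>n \<omega>. empL2sq {..<n div 2} (\<lambda>i. Z i \<omega>) \<phi>0) (enn2real (L2sq P0 \<phi>0))"
    using wlln[OF M Z_indep Z_distr fm fpos fint _ F2] ceq unfolding empL2sq_def f_def by simp
  have D1: "conv_in_prob M even_seq (\<lambda>n \<omega>. empL2sq {n div 2..<n} (\<lambda>i. Z i \<omega>)
      (\<lambda>z. g1 n (restrict (\<lambda>j. Z j \<omega>) {..<n div 2}) z - \<phi>0 z)) 0"
    by (rule D_conv[where g = g1 and J = "\<lambda>n. {..<n div 2}", OF M Z_indep Z_distr \<phi>0_meas g1_meas])
       (use cons1 in \<open>auto simp: \<phi>1eq\<close>)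
  have D2: "conv_in_prob M even_seq (\<lambda>n \<omega>. empL2sq {..<n div 2} (\<lambda>i. Z i \<omega>)
      (\<lambda>z. g2 n (restrict (\<lambda>j. Z j \<omega>) {n div 2..<n}) z - \<phi>0 z)) 0"
    by (rule D_conv[where g = g2 and J = "\<lambda>n. {n div 2..<n}", OF M Z_indep Z_distr \<phi>0_meas g2_meas])
       (use cons2 in \<open>auto simp: \<phi>2eq\<close>)
  have A1: "conv_in_prob M even_seq (\<lambda>n \<omega>. empL2sq {n div 2..<n} (\<lambda>i. Z i \<omega>)
      (g1 n (restrict (\<lambda>j. Z j \<omega>) {..<n div 2}))) (enn2real (L2sq P0 \<phi>0))"
    by (rule conv_comb[OF M _ _ _ B1 D1])
       (auto intro: emp_bound emp_meas[OF Zm \<phi>0_meas g1_meas])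
  have A2: "conv_in_prob M even_seq (\<lambda>n \<omega>. empL2sq {..<n div 2} (\<lambda>i. Z i \<omega>)
      (g2 n (restrict (\<lambda>j. Z j \<omega>) {n div 2..<n}))) (enn2real (L2sq P0 \<phi>0))"
    by (rule conv_comb[OF M _ _ _ B2 D2])
       (auto intro: emp_bound emp_meas[OF Zm \<phi>0_meas g2_meas])
  have A3: "conv_in_prob M even_seq (\<lambda>n \<omega>. (1/2) * (empL2sq {n div 2..<n} (\<lambda>i. Z i \<omega>)
      (g1 n (restrict (\<lambda>j. Z j \<omega>) {..<n div 2})) + empL2sq {..<n div 2} (\<lambda>i. Z i \<omega>)
      (g2 n (restrict (\<lambda>j. Z j \<omega>) {n div 2..<n})))) (enn2real (L2sq P0 \<phi>0))"
    by (rule conv_half[OF M _ _ A1 A2]) (auto intro: emp_meas[OF Zm \<phi>0_meas g1_meas] emp_meas[OF Zm \<phi>0_meas g2_meas])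
  show ?thesis unfolding \<phi>1eq \<phi>2eq using A1 A2 A3 by simp
qed

end
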